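(* Let $n\ge1$, $k\ge0$ an integer, $\alpha,\beta\in\mathbb R$. For every $f\in C_c^{k+1}(\mathbb R^n\setminus\{0\})$, $R_{\alpha,k}(r^\beta f)=r^\beta R_{\alpha-2\beta,k}(f)$. For every $f\in C_c^{k+2}(\mathbb R^n\setminus\{0\})$, $$\|R_{\alpha,k}(\partial_rf)\|_\alpha^2=\frac{(n-2k-4-\alpha)^2}{4}\|R_{\alpha+2,k}(f)\|_{\alpha+2}^2+\|R_{\alpha,k+1}(f)\|_\alpha^2$$ and $$\langle R_{\alpha,k}(\partial_rf),R_{\alpha+2,k}(f)\rangle_{\alpha+1}=\frac{\alpha+2k+4-n}{2}\|R_{\alpha+2,k}(f)\|_{\alpha+2}^2 .$$
   Context: Write $r=|x|$ for $x\in\mathbb R^n$. For $\beta\in\mathbb R$ and $f,g$ continuous with compact support in $\mathbb R^n\setminus\{0\}$, set $\|g\|_\beta^2=\int_{\mathbb R^n}|g(x)|^2|x|^{-\beta}\,dx$ and $\langle f,g\rangle_\beta=\int_{\mathbb R^n}f(x)g(x)|x|^{-\beta}\,dx$. Let $\partial_r=\sum_{i=1}^n\frac{x_i}{r}\partial_{x_i}$; for $\alpha\in\mathbb R$, $T_\alpha f=\partial_r f+\frac{n-2-\alpha}{2r}f$; for an integer $k\ge0$, $R_{\alpha,k}=T_\alpha\circ T_{\alpha+2}\circ\cdots\circ T_{\alpha+2k}$ (composition of $k+1$ operators, so $R_{\alpha,0}=T_\alpha$). *)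

theory Defs
  imports "HOL-Analysis.Analysis"
begin

text \<open>Functions of class C^m on the whole space: C^0 = continuous, and C^(m+1) =
  differentiable everywhere with all first partial derivatives of class C^m.\<close>
fun Cm :: "nat \<Rightarrow> ('a::euclidean_space \<Rightarrow> real) \<Rightarrow> bool" where
  "Cm 0 f = continuous_on UNIV f"
| "Cm (Suc m) f = ((\<forall>x. f differentiable (at x)) \<and>
      (\<forall>i\<in>Basis. Cm m (\<lambda>x. frechet_derivative f (at x) i)))"

text \<open>f belongs to C_c^m(R^n minus 0) (extended by zero): C^m with compact support
  not containing the origin.\<close>
definition Cc_punct :: "nat \<Rightarrow> ('a::euclidean_space \<Rightarrow> real) \<Rightarrow> bool" where
  "Cc_punct m f \<longleftrightarrow> Cm m f \<and> compact (closure {x. f x \<noteq> 0})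
      \<and> 0 \<notin> closure {x. f x \<noteq> 0}"

text \<open>Radial derivative: directional derivative in direction x/|x|.\<close>
definition rad_deriv :: "('a::euclidean_space \<Rightarrow> real) \<Rightarrow> 'a \<Rightarrow> real" where
  "rad_deriv f x = frechet_derivative f (at x) (x /\<^sub>R norm x)"

definition T_op :: "real \<Rightarrow> ('a::euclidean_space \<Rightarrow> real) \<Rightarrow> 'a \<Rightarrow> real" where
  "T_op \<alpha> f x = rad_deriv f x + (real DIM('a) - 2 - \<alpha>) / (2 * norm x) * f x"

text \<open>R_{alpha,k} = T_alpha o T_{alpha+2} o ... o T_{alpha+2k}.\<close>
fun R_op :: "real \<Rightarrow> nat \<Rightarrow> ('a::euclidean_space \<Rightarrow> real) \<Rightarrow> 'a \<Rightarrow> real" where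
  "R_op \<alpha> 0 f = T_op \<alpha> f"
| "R_op \<alpha> (Suc k) f = T_op \<alpha> (R_op (\<alpha> + 2) k f)"

definition wnorm2 :: "real \<Rightarrow> ('a::euclidean_space \<Rightarrow> real) \<Rightarrow> real" where
  "wnorm2 \<beta> g = (LINT x|lborel. (g x)\<^sup>2 * norm x powr (- \<beta>))"

definition winner :: "real \<Rightarrow> ('a::euclidean_space \<Rightarrow> real) \<Rightarrow> ('a \<Rightarrow> real) \<Rightarrow> real" where
  "winner \<beta> f g = (LINT x|lborel. f x * g x * norm x powr (- \<beta>))"

end

theory Submission
  imports Defs
begin


fun Cmo :: "nat \<Rightarrow> ('a::euclidean_space \<Rightarrow> real) \<Rightarrow> bool" where
  "Cmo 0 f = continuous_on (-{0}) f"
| "Cmo (Suc m) f = ((\<forall>x. x \<noteq> 0 \<longrightarrow> f differentiable (at x)) \<and>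
      (\<forall>i\<in>Basis. Cmo m (\<lambda>x. frechet_derivative f (at x) i)))"

lemma open_punct: "open (-{0::'a::euclidean_space})" by auto

lemma fd_cong:
  assumes "open V" "x \<in> V" "\<And>y. y \<in> V \<Longrightarrow> u y = v y"
  shows "frechet_derivative u (at x) = frechet_derivative v (at x)"
proof -
  have "(\<lambda>D. (u has_derivative D) (at x)) = (\<lambda>D. (v has_derivative D) (at x))"
    using has_derivative_transform_within_open[OF _ assms(1,2), of u _ UNIV v]
      has_derivative_transform_within_open[OF _ assms(1,2), of v _ UNIV u] assms(3)
    by (auto intro!: ext)
  then show ?thesis unfolding frechet_derivative_def by simp
qed

lemma fd_zero:
  assumes "open V" "x \<in> V" "\<And>y. y \<in> V \<Longrightarrow> u y = 0"
  shows "frechet_derivative u (at x) = (\<lambda>v. 0)"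
  using fd_cong[OF assms(1,2), of u "\<lambda>_. 0"] assms(3) by simp

lemma Cmo_mono: "Cmo (Suc m) f \<Longrightarrow> Cmo m f"
proof (induction m arbitrary: f)
  case 0
  then show ?case
    by (auto intro!: continuous_at_imp_continuous_on differentiable_imp_continuous_within)
next
  case (Suc m)
  then show ?case by auto
qed

lemma Cmo_mono_le: "Cmo m f \<Longrightarrow> k \<le> m \<Longrightarrow> Cmo k f"
proof (induction m arbitrary: k)
  case 0 then show ?case by simp
next
  case (Suc m)
  show ?case
  proof (cases "k = Suc m")
    case False then show ?thesis using Suc.IH[OF Cmo_mono[OF Suc.prems(1)]] Suc.prems(2) by simp
  qed (use Suc.prems in simp)
qed

lemma Cmo_cong: "Cmo m f \<Longrightarrow> (\<And>x. x \<noteq> 0 \<Longrightarrow> f x = g x) \<Longrightarrow> Cmo m g"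
proof (induction m arbitrary: f g)
  case 0
  then show ?case using continuous_on_cong[of "-{0}" "-{0}" f g] by auto
next
  case (Suc m)
  have d: "g differentiable (at x)" if "x \<noteq> 0" for x
  proof -
    have "f differentiable (at x)" using Suc.prems(1) that by simp
    then obtain D where "(f has_derivative D) (at x)" unfolding differentiable_def by blast
    then have "(g has_derivative D) (at x)"
      by (rule has_derivative_transform_within_open[OF _ open_punct]) (use that Suc.prems(2) in auto)
    then show ?thesis unfolding differentiable_def by blast
  qed
  have e: "frechet_derivative f (at x) = frechet_derivative g (at x)" if "x \<noteq> 0" for x
    using fd_cong[OF open_punct, of x f g] Suc.prems that by auto
  show ?case using Suc.prems Suc.IH[of "\<lambda>x. frechet_derivative f (at x) i" "\<lambda>x. frechet_derivative g (at x) i" for i]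
    d e by auto
qed

lemma Cm_Cmo: "Cm m f \<Longrightarrow> Cmo m f"
  by (induction m arbitrary: f) (auto intro: continuous_on_subset)

lemma Cmo_const: "Cmo m (\<lambda>x. c)"
  by (induction m arbitrary: c) auto

lemma fd_add:
  assumes "f differentiable (at x)" "g differentiable (at x)"
  shows "frechet_derivative (\<lambda>y. f y + g y) (at x) = (\<lambda>v. frechet_derivative f (at x) v + frechet_derivative g (at x) v)"
proof -
  have "((\<lambda>y. f y + g y) has_derivative (\<lambda>v. frechet_derivative f (at x) v + frechet_derivative g (at x) v)) (at x)"
    by (rule has_derivative_add) (use assms in \<open>simp_all add: frechet_derivative_works[symmetric]\<close>)
  then show ?thesis by (rule frechet_derivative_at[symmetric])
qed

lemma fd_mult:
  assumes "f differentiable (at x)" "g differentiable (at x)"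
  shows "frechet_derivative (\<lambda>y. f y * g y :: real) (at x) = (\<lambda>v. f x * frechet_derivative g (at x) v + frechet_derivative f (at x) v * g x)"
proof -
  have "((\<lambda>y. f y * g y) has_derivative (\<lambda>v. f x * frechet_derivative g (at x) v + frechet_derivative f (at x) v * g x)) (at x)"
    by (rule has_derivative_mult) (use assms in \<open>simp_all add: frechet_derivative_works[symmetric]\<close>)
  then show ?thesis by (rule frechet_derivative_at[symmetric])
qed

lemma Cmo_add: "Cmo m f \<Longrightarrow> Cmo m g \<Longrightarrow> Cmo m (\<lambda>x. f x + g x)"
proof (induction m arbitrary: f g)
  case 0 then show ?case by (auto intro!: continuous_intros)
next
  case (Suc m)
  show ?case
  proof (simp, intro conjI allI impI ballI)
    fix x :: 'a assume "x \<noteq> 0" then show "(\<lambda>x. f x + g x) differentiable at x"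
      using Suc.prems by auto
  next
    fix i :: 'a assume i: "i \<in> Basis"
    have "Cmo m (\<lambda>x. frechet_derivative f (at x) i + frechet_derivative g (at x) i)"
      using Suc.prems i by (intro Suc.IH) auto
    then show "Cmo m (\<lambda>x. frechet_derivative (\<lambda>x. f x + g x) (at x) i)"
      by (rule Cmo_cong) (use Suc.prems(1,2) in \<open>simp add: fd_add\<close>)
  qed
qed

lemma Cmo_mult: "Cmo m f \<Longrightarrow> Cmo m g \<Longrightarrow> Cmo m (\<lambda>x. f x * g x)"
proof (induction m arbitrary: f g)
  case 0 then show ?case by (auto intro!: continuous_intros)
next
  case (Suc m)
  show ?case
  proof (simp, intro conjI allI impI ballI)
    fix x :: 'a assume "x \<noteq> 0" then show "(\<lambda>x. f x * g x) differentiable at x"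
      using Suc.prems by auto
  next
    fix i :: 'a assume i: "i \<in> Basis"
    have "Cmo m (\<lambda>x. f x * frechet_derivative g (at x) i + frechet_derivative f (at x) i * g x)"
      using Suc.prems i Cmo_mono by (intro Cmo_add Suc.IH) auto
    then show "Cmo m (\<lambda>x. frechet_derivative (\<lambda>x. f x * g x) (at x) i)"
      by (rule Cmo_cong) (use Suc.prems(1,2) in \<open>simp add: fd_mult\<close>)
  qed
qed

lemma Cmo_sum: "finite A \<Longrightarrow> (\<And>i. i \<in> A \<Longrightarrow> Cmo m (F i)) \<Longrightarrow> Cmo m (\<lambda>x. \<Sum>i\<in>A. F i x)"
  by (induction A rule: finite_induct) (auto intro: Cmo_add Cmo_const)

lemma Cmo_inner: "Cmo m (\<lambda>x::'a::euclidean_space. x \<bullet> j)"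
proof (induction m)
  case 0 then show ?case by (auto intro!: continuous_intros)
next
  case (Suc m)
  have "frechet_derivative (\<lambda>x::'a. x \<bullet> j) (at x) = (\<lambda>v. v \<bullet> j)" for x
    by (rule frechet_derivative_at[symmetric]) (auto intro!: derivative_eq_intros)
  moreover have "(\<lambda>x::'a. x \<bullet> j) differentiable at x" for x
    by (auto intro!: derivative_intros)
  ultimately show ?case by (simp add: Cmo_const)
qed

lemma has_derivative_norm_powr:
  assumes "(x::'a::euclidean_space) \<noteq> 0"
  shows "((\<lambda>y. norm y powr p) has_derivative (\<lambda>v. p * norm x powr (p - 2) * (x \<bullet> v))) (at x)"
proof -
  have nx: "norm x > 0" using assms by simp
  have "((\<lambda>y. norm y powr p) has_derivative (\<lambda>v. norm x powr p * (0 * ln (norm x) + (v \<bullet> sgn x) * p / norm x))) (at x)"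
    by (rule has_derivative_powr[OF has_derivative_norm[OF assms] has_derivative_const]) (use assms in auto)
  moreover have "norm x powr p * (0 * ln (norm x) + (v \<bullet> sgn x) * p / norm x) = p * norm x powr (p - 2) * (x \<bullet> v)" for v
  proof -
    have a: "v \<bullet> sgn x = (x \<bullet> v) / norm x" by (simp add: sgn_div_norm inner_commute field_simps)
    have b: "norm x powr (p - 2) = norm x powr p / (norm x * norm x)"
      using nx by (simp add: powr_diff power2_eq_square)
    show ?thesis unfolding a b using nx by (simp add: field_simps)
  qed
  ultimately show ?thesis by simp
qed

lemma Cmo_norm_powr: "Cmo m (\<lambda>x::'a::euclidean_space. norm x powr p)"
proof (induction m arbitrary: p)
  case 0
  show ?case by (auto intro!: continuous_intros)
next
  case (Suc m)
  have fd: "frechet_derivative (\<lambda>x::'a. norm x powr p) (at x) = (\<lambda>v. p * norm x powr (p - 2) * (x \<bullet> v))"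
    if "x \<noteq> 0" for x
    by (rule frechet_derivative_at[symmetric, OF has_derivative_norm_powr[OF that]])
  have "Cmo m (\<lambda>x::'a. frechet_derivative (\<lambda>x. norm x powr p) (at x) i)" for i
    by (rule Cmo_cong[of _ "\<lambda>x::'a. p * norm x powr (p - 2) * (x \<bullet> i)"])
      (intro Cmo_mult Cmo_const Suc.IH Cmo_inner, simp add: fd)
  moreover have "(\<lambda>x::'a. norm x powr p) differentiable at x" if "x \<noteq> 0" for x
    using has_derivative_norm_powr[OF that] unfolding differentiable_def by blast
  ultimately show ?case by simp
qed

lemma fd_repr:
  assumes "f differentiable (at x)"
  shows "frechet_derivative f (at x) v = (\<Sum>i\<in>Basis. (v \<bullet> i) * frechet_derivative f (at x) i)"
proof -
  have lin: "linear (frechet_derivative f (at x))" using linear_frechet_derivative[OF assms] .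
  have "frechet_derivative f (at x) v = frechet_derivative f (at x) (\<Sum>i\<in>Basis. (v \<bullet> i) *\<^sub>R i)"
    by (simp add: euclidean_representation)
  also have "\<dots> = (\<Sum>i\<in>Basis. (v \<bullet> i) * frechet_derivative f (at x) i)"
    using lin by (simp add: linear_sum linear_scale)
  finally show ?thesis .
qed

lemma rad_deriv_repr:
  assumes "f differentiable (at x)" "x \<noteq> 0"
  shows "rad_deriv f x = (\<Sum>i\<in>Basis. ((x \<bullet> i) * norm x powr (-1)) * frechet_derivative f (at x) i)"
  unfolding rad_deriv_def using assms
  by (subst fd_repr[OF assms(1)]) (simp add: powr_minus divide_inverse mult.commute)

lemma T_op_repr:
  fixes f :: "'a::euclidean_space \<Rightarrow> real"
  assumes "f differentiable (at x)" "x \<noteq> 0"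
  shows "T_op c f x = (\<Sum>i\<in>Basis. ((x \<bullet> i) * norm x powr (-1)) * frechet_derivative f (at x) i)
     + ((real DIM('a) - 2 - c) / 2) * (norm x powr (-1) * f x)"
proof -
  have p: "norm x powr (-1) = 1 / norm x" using assms(2) by (simp add: powr_neg_one)
  have "(real DIM('a) - 2 - c) / (2 * norm x) * f x = ((real DIM('a) - 2 - c) / 2) * (norm x powr (-1) * f x)"
    unfolding p by simp
  then show ?thesis unfolding T_op_def rad_deriv_repr[OF assms] by (rule arg_cong)
qed

lemma Cmo_rad_deriv: "Cmo (Suc m) f \<Longrightarrow> Cmo m (rad_deriv f)"
  apply (rule Cmo_cong[of _ "\<lambda>x. \<Sum>i\<in>Basis. ((x \<bullet> i) * norm x powr (-1)) * frechet_derivative f (at x) i"])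
   apply (intro Cmo_sum Cmo_mult Cmo_inner Cmo_norm_powr; simp)
  apply (subst rad_deriv_repr; simp)
  done

lemma Cmo_T_op: "Cmo (Suc m) f \<Longrightarrow> Cmo m (T_op c f)"
  for f :: "'a::euclidean_space \<Rightarrow> real"
  apply (rule Cmo_cong[of _ "\<lambda>x. (\<Sum>i\<in>Basis. ((x \<bullet> i) * norm x powr (-1)) * frechet_derivative f (at x) i)
     + ((real DIM('a) - 2 - c) / 2) * (norm x powr (-1) * f x)"])
   apply (intro Cmo_add Cmo_sum Cmo_mult Cmo_inner Cmo_norm_powr Cmo_const; simp add: Cmo_mono)
  apply (subst T_op_repr; simp)
  done

lemma Cmo_R_op: "Cmo (k + 1 + m) f \<Longrightarrow> Cmo m (R_op c k f)"
proof (induction k arbitrary: c m)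
  case 0 then show ?case by (simp add: Cmo_T_op)
next
  case (Suc k)
  have "Cmo (Suc m) (R_op (c + 2) k f)" using Suc.IH[of "Suc m"] Suc.prems by simp
  then show ?case by (simp add: Cmo_T_op)
qed

lemma T_op_zero: "open V \<Longrightarrow> (\<And>y. y \<in> V \<Longrightarrow> f y = 0) \<Longrightarrow> x \<in> V \<Longrightarrow> T_op c f x = 0"
  unfolding T_op_def rad_deriv_def by (simp add: fd_zero)

lemma R_op_zero: "open V \<Longrightarrow> (\<And>y. y \<in> V \<Longrightarrow> f y = 0) \<Longrightarrow> x \<in> V \<Longrightarrow> R_op c k f x = 0"
proof (induction k arbitrary: c x)
  case 0 then show ?case by (simp add: T_op_zero)
next
  case (Suc k) then show ?case by (simp add: T_op_zero)
qed

lemma T_op_cong: "x \<noteq> 0 \<Longrightarrow> (\<And>y. y \<noteq> 0 \<Longrightarrow> u y = v y) \<Longrightarrow> T_op c u x = T_op c v x"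
  unfolding T_op_def rad_deriv_def using fd_cong[OF open_punct, of x u v] by simp

lemma T_op_powr:
  fixes h :: "'a::euclidean_space \<Rightarrow> real"
  assumes "x \<noteq> 0" "h differentiable (at x)"
  shows "T_op a (\<lambda>y. norm y powr b * h y) x = norm x powr b * T_op (a - 2 * b) h x"
proof -
  have "((\<lambda>y. norm y powr b * h y) has_derivative
     (\<lambda>v. norm x powr b * frechet_derivative h (at x) v + b * norm x powr (b - 2) * (x \<bullet> v) * h x)) (at x)"
    using has_derivative_mult[OF has_derivative_norm_powr[OF assms(1)] assms(2)[unfolded frechet_derivative_works]]
    by simp
  then have fd: "frechet_derivative (\<lambda>y. norm y powr b * h y) (at x) =
     (\<lambda>v. norm x powr b * frechet_derivative h (at x) v + b * norm x powr (b - 2) * (x \<bullet> v) * h x)"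
    by (rule frechet_derivative_at[symmetric])
  have nx: "norm x > 0" using assms by simp
  have e1: "x \<bullet> (x /\<^sub>R norm x) = norm x" using nx by (simp add: dot_square_norm power2_eq_square)
  have e2: "norm x powr (b - 2) * norm x = norm x powr b / norm x"
    using nx by (simp add: powr_diff power2_eq_square)
  have e3: "(x \<bullet> x) * norm x powr (b - 2) = norm x powr b"
    using nx by (simp add: powr_diff dot_square_norm power2_eq_square)
  show ?thesis
    unfolding T_op_def rad_deriv_def fd
    using nx by (simp add: e1 e2 e3 field_simps)
qed

lemma part1:
  fixes f :: "'a::euclidean_space \<Rightarrow> real"
  assumes "Cmo (k + 1) f" "x \<noteq> 0"
  shows "R_op a k (\<lambda>y. norm y powr b * f y) x = norm x powr b * R_op (a - 2 * b) k f x"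
  using assms
proof (induction k arbitrary: a x)
  case 0
  then show ?case using T_op_powr[of x f a b] by simp
next
  case (Suc k)
  have IH: "R_op (a + 2) k (\<lambda>y. norm y powr b * f y) y = norm y powr b * R_op (a + 2 - 2 * b) k f y"
    if "y \<noteq> 0" for y
  proof -
    have c: "Cmo (k+1) f" by (rule Cmo_mono_le[OF Suc.prems(1)]) simp
    show ?thesis using Suc.IH[OF c that] by simp
  qed
  have eq: "a + 2 - 2 * b = (a - 2 * b) + 2" by simp
  have d: "R_op (a - 2 * b + 2) k f differentiable (at x)"
    using Cmo_R_op[of k 1 f "a - 2 * b + 2"] Suc.prems by simp
  have "R_op a (Suc k) (\<lambda>y. norm y powr b * f y) x = T_op a (\<lambda>y. norm y powr b * R_op (a - 2 * b + 2) k f y) x"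
    using T_op_cong[OF Suc.prems(2), of "R_op (a + 2) k (\<lambda>y. norm y powr b * f y)"] IH by (simp add: eq)
  also have "\<dots> = norm x powr b * R_op (a - 2 * b) (Suc k) f x"
    using T_op_powr[OF Suc.prems(2) d] by simp
  finally show ?case .
qed



lemma cont_ext:
  fixes u :: "'a::euclidean_space \<Rightarrow> real"
  assumes "continuous_on (-{0}) u" "closed S" "0 \<notin> S" "\<And>x. x \<notin> S \<Longrightarrow> u x = 0"
  shows "continuous_on UNIV u"
proof (rule continuous_at_imp_continuous_on, intro ballI)
  fix x :: 'a
  show "isCont u x"
  proof (cases "x = 0")
    case True
    have "eventually (\<lambda>y. u y = 0) (nhds x)"
      using assms(2,3,4) True by (intro eventually_nhds_in_open[of "-S", THEN eventually_mono]) auto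
    then show ?thesis by (subst isCont_cong) auto
  next
    case False
    then show ?thesis using assms(1) continuous_on_eq_continuous_at[OF open_punct] by auto
  qed
qed

lemma intg_cont:
  fixes u :: "'a::euclidean_space \<Rightarrow> real"
  assumes "continuous_on UNIV u" "compact S" "\<And>x. x \<notin> S \<Longrightarrow> u x = 0"
  shows "integrable lborel u"
proof -
  have "integrable lborel (\<lambda>x. indicator S x *\<^sub>R u x)"
    by (rule borel_integrable_compact[OF assms(2)]) (rule continuous_on_subset[OF assms(1)], simp)
  also have "(\<lambda>x. indicator S x *\<^sub>R u x) = u"
  proof (rule ext)
    fix x show "indicator S x *\<^sub>R u x = u x" using assms(3)[of x] by (cases "x \<in> S") auto
  qed
  finally show ?thesis .
qed

lemma intg:
  fixes u :: "'a::euclidean_space \<Rightarrow> real"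
  assumes "continuous_on (-{0}) u" "compact S" "0 \<notin> S" "\<And>x. x \<notin> S \<Longrightarrow> u x = 0"
  shows "integrable lborel u"
  using intg_cont[OF cont_ext[OF assms(1) compact_imp_closed[OF assms(2)] assms(3,4)] assms(2,4)] .

lemma scale_integral:
  fixes f :: "'a::euclidean_space \<Rightarrow> real"
  assumes [measurable]: "f \<in> borel_measurable borel" and t: "t > 0"
  shows "integral\<^sup>L lborel f = t ^ DIM('a) * integral\<^sup>L lborel (\<lambda>x. f (t *\<^sub>R x))"
proof -
  have "integral\<^sup>L lborel f = integral\<^sup>L (density (distr lborel borel (\<lambda>x. 0 + t *\<^sub>R x)) (\<lambda>_. \<bar>t\<bar> ^ DIM('a))) f"
    by (rule arg_cong[where f="\<lambda>M. integral\<^sup>L M f", OF lborel_affine[where 'a='a, of t 0]]) (use t in simp)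
  also have "\<dots> = integral\<^sup>L (distr lborel borel (\<lambda>x. 0 + t *\<^sub>R x)) (\<lambda>x. \<bar>t\<bar> ^ DIM('a) *\<^sub>R f x)"
    by (subst integral_density) auto
  also have "\<dots> = integral\<^sup>L lborel (\<lambda>x. \<bar>t\<bar> ^ DIM('a) *\<^sub>R f (0 + t *\<^sub>R x))"
    by (subst integral_distr) auto
  also have "\<dots> = t ^ DIM('a) * integral\<^sup>L lborel (\<lambda>x. f (t *\<^sub>R x))"
    using t by simp
  finally show ?thesis .
qed

lemma ray_deriv:
  fixes \<phi> :: "'a::euclidean_space \<Rightarrow> real"
  assumes der: "(\<phi> has_derivative D) (at (z *\<^sub>R x))"
  shows "DERIV (\<lambda>s. \<phi> (s *\<^sub>R x)) z :> D x"
proof -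
  have "((\<lambda>s. \<phi> (s *\<^sub>R x)) has_derivative (\<lambda>s. D (s *\<^sub>R x))) (at z)"
    using has_derivative_compose[OF has_derivative_scaleR_left[OF has_derivative_ident, of x] der] by simp
  moreover have "(\<lambda>s. D (s *\<^sub>R x)) = (\<lambda>s. D x * s)"
    using linear_scale[OF has_derivative_linear[OF der]] by (auto intro!: ext)
  ultimately have "((\<lambda>s. \<phi> (s *\<^sub>R x)) has_derivative (\<lambda>s. D x * s)) (at z)"
    by (simp add: mult.commute)
  then show ?thesis unfolding has_field_derivative_def by simp
qed

lemma euler_identity:
  fixes \<phi> :: "'a::euclidean_space \<Rightarrow> real" and \<phi>' :: "'a \<Rightarrow> 'a \<Rightarrow> real"
  assumes S: "compact S" "0 \<notin> S" and supp: "\<And>x. x \<notin> S \<Longrightarrow> \<phi> x = 0"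
    and der: "\<And>x. x \<noteq> 0 \<Longrightarrow> (\<phi> has_derivative \<phi>' x) (at x)"
    and cont: "continuous_on (-{0}) (\<lambda>x. \<phi>' x x)"
    and supp': "\<And>x. x \<notin> S \<Longrightarrow> \<phi>' x x = 0"
  shows "integral\<^sup>L lborel (\<lambda>x. \<phi>' x x) = - real DIM('a) * integral\<^sup>L lborel \<phi>"
proof -
  define \<psi> where "\<psi> = (\<lambda>x. \<phi>' x x)"
  define n where "n = DIM('a)"
  define I where "I = integral\<^sup>L lborel \<phi>"
  have cphi0: "continuous_on (-{0}) \<phi>"
    using der by (intro continuous_at_imp_continuous_on ballI has_derivative_continuous) auto
  have cphi: "continuous_on UNIV \<phi>"
    by (rule cont_ext[OF cphi0 compact_imp_closed[OF S(1)] S(2) supp])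
  have cpsi: "continuous_on UNIV \<psi>"
    unfolding \<psi>_def by (rule cont_ext[OF cont compact_imp_closed[OF S(1)] S(2) supp'])
  have mphi[measurable]: "\<phi> \<in> borel_measurable borel"
    using cphi by (rule borel_measurable_continuous_onI)
  have mpsi[measurable]: "\<psi> \<in> borel_measurable borel"
    using cpsi by (rule borel_measurable_continuous_onI)
  obtain R where R: "R > 0" "\<And>x. x \<in> S \<Longrightarrow> norm x \<le> R"
    using compact_imp_bounded[OF S(1)] unfolding bounded_pos by auto
  obtain M where M: "M > 0" "\<And>y. y \<in> \<psi> ` S \<Longrightarrow> norm y \<le> M"
    using compact_imp_bounded[OF compact_continuous_image[OF continuous_on_subset[OF cpsi] S(1)]]
    unfolding bounded_pos by auto
  have Mb: "\<bar>\<psi> x\<bar> \<le> M" for x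
    using M supp'[of x] unfolding \<psi>_def by (cases "x \<in> S") auto
  define h :: "nat \<Rightarrow> real" where "h = (\<lambda>j. inverse (real (Suc (Suc j))))"
  have hpos: "h j > 0" "h j < 1" for j unfolding h_def by (auto simp: field_simps)
  define s where "s = (\<lambda>j x. (\<phi> ((1 + h j) *\<^sub>R x) - \<phi> x) / h j)"
  define w where "w = (\<lambda>x. indicator (cball (0::'a) R) x *\<^sub>R M)"
  have iw: "integrable lborel w"
    unfolding w_def by (rule borel_integrable_compact) (auto intro!: continuous_intros)
  have scl: "integral\<^sup>L lborel (\<lambda>x. \<phi> (t *\<^sub>R x)) = I / t ^ n" if "t > 0" for t
    using scale_integral[OF mphi that] that unfolding I_def n_def by (simp add: field_simps)
  have iphi: "integrable lborel \<phi>" by (rule intg_cont[OF cphi S(1) supp])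
  have iphit: "integrable lborel (\<lambda>x. \<phi> (t *\<^sub>R x))" if "t > 0" for t
  proof (rule intg_cont[of _ "(*\<^sub>R) (inverse t) ` S"])
    show "continuous_on UNIV (\<lambda>x. \<phi> (t *\<^sub>R x))"
      by (rule continuous_on_compose2[OF cphi]) (auto intro!: continuous_intros)
    show "compact ((*\<^sub>R) (inverse t) ` S)" using S(1) by (rule compact_scaling)
    fix x assume "x \<notin> (*\<^sub>R) (inverse t) ` S"
    have "t *\<^sub>R x \<notin> S"
    proof
      assume "t *\<^sub>R x \<in> S"
      then have "inverse t *\<^sub>R (t *\<^sub>R x) \<in> (*\<^sub>R) (inverse t) ` S" by (rule imageI)
      moreover have "inverse t *\<^sub>R (t *\<^sub>R x) = x" using that by simp
      ultimately show False using \<open>x \<notin> (*\<^sub>R) (inverse t) ` S\<close> by simp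
    qed
    then show "\<phi> (t *\<^sub>R x) = 0" by (rule supp)
  qed
  have ints: "integral\<^sup>L lborel (s j) = ((1 / (1 + h j) ^ n - 1) / h j) * I" for j
  proof -
    have "integral\<^sup>L lborel (s j) = (integral\<^sup>L lborel (\<lambda>x. \<phi> ((1 + h j) *\<^sub>R x)) - I) / h j"
      unfolding s_def I_def using iphit[of "1 + h j"] iphi hpos[of j] by simp
    also have "\<dots> = ((1 / (1 + h j) ^ n - 1) / h j) * I"
      using scl[of "1 + h j"] hpos[of j] by (simp add: field_simps)
    finally show ?thesis .
  qed
  have limA: "(\<lambda>j. integral\<^sup>L lborel (s j)) \<longlonglongrightarrow> - real n * I"
  proof -
    have "DERIV (\<lambda>t. inverse ((1 + t) ^ n)) 0 :> - real n"
      by (auto intro!: derivative_eq_intros)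
    then have L: "((\<lambda>t. (inverse ((1 + t) ^ n) - 1) / t) \<longlongrightarrow> - real n) (at 0)"
      unfolding DERIV_def by simp
    have hl: "filterlim h (at 0) sequentially"
    proof (rule filterlim_atI)
      show "h \<longlonglongrightarrow> 0" unfolding h_def
        by (rule LIMSEQ_Suc[OF LIMSEQ_inverse_real_of_nat])
      show "\<forall>\<^sub>F x in sequentially. h x \<noteq> 0" by (intro always_eventually allI) (metis hpos(1) less_irrefl)
    qed
    have "(\<lambda>j. (inverse ((1 + h j) ^ n) - 1) / h j) \<longlonglongrightarrow> - real n"
      using filterlim_compose[OF L hl] by (simp add: o_def)
    then have "(\<lambda>j. ((inverse ((1 + h j) ^ n) - 1) / h j) * I) \<longlonglongrightarrow> - real n * I"
      by (intro tendsto_mult tendsto_const)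
    then show ?thesis unfolding ints by (simp add: divide_inverse)
  qed
  have limB: "(\<lambda>j. integral\<^sup>L lborel (s j)) \<longlonglongrightarrow> integral\<^sup>L lborel \<psi>"
  proof (rule integral_dominated_convergence[where w=w])
    show "\<psi> \<in> borel_measurable lborel" using mpsi by (simp add: measurable_lborel1)
    show "integrable lborel w" by (rule iw)
    show "s j \<in> borel_measurable lborel" for j unfolding s_def by measurable
    show "AE x in lborel. (\<lambda>j. s j x) \<longlonglongrightarrow> \<psi> x"
    proof (rule AE_I2)
      fix x :: 'a
      show "(\<lambda>j. s j x) \<longlonglongrightarrow> \<psi> x"
      proof (cases "x = 0")
        case True
        then show ?thesis unfolding s_def \<psi>_def using supp'[of 0] S(2) by simp
      next
        case False
        have "DERIV (\<lambda>s. \<phi> (s *\<^sub>R x)) 1 :> \<psi> x"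
          unfolding \<psi>_def using ray_deriv[of \<phi> "\<phi>' x" 1 x] der[OF False] by simp
        then have L: "((\<lambda>t. (\<phi> ((1 + t) *\<^sub>R x) - \<phi> x) / t) \<longlongrightarrow> \<psi> x) (at 0)"
          unfolding DERIV_def by simp
        have hl: "filterlim h (at 0) sequentially"
        proof (rule filterlim_atI)
          show "h \<longlonglongrightarrow> 0" unfolding h_def
            by (rule LIMSEQ_Suc[OF LIMSEQ_inverse_real_of_nat])
          show "\<forall>\<^sub>F x in sequentially. h x \<noteq> 0" by (intro always_eventually allI) (metis hpos(1) less_irrefl)
        qed
        show ?thesis using filterlim_compose[OF L hl] unfolding s_def by (simp add: o_def)
      qed
    qed
    show "AE x in lborel. norm (s j x) \<le> w x" for j
    proof (rule AE_I2)
      fix x :: 'a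
      define t where "t = 1 + h j"
      have t: "1 < t" "t < 2" unfolding t_def using hpos[of j] by auto
      show "norm (s j x) \<le> w x"
      proof (cases "norm x \<le> R")
        case False
        have n1: "norm (t *\<^sub>R x) > R"
        proof -
          have "norm x \<le> t * norm x" using t by (simp add: mult_le_cancel_right1)
          then show ?thesis using False t by simp
        qed
        have "x \<notin> S" "t *\<^sub>R x \<notin> S" using R(2) False n1 by force+
        then show ?thesis unfolding s_def w_def t_def[symmetric] using supp M(1) by (simp add: indicator_def)
      next
        case True
        have "\<bar>\<phi> (t *\<^sub>R x) - \<phi> x\<bar> \<le> (t - 1) * M"
        proof (cases "x = 0")
          case True then show ?thesis using t M by simp
        next
          case False
          have D: "DERIV (\<lambda>s. \<phi> (s *\<^sub>R x)) z :> \<phi>' (z *\<^sub>R x) x" if "1 \<le> z" "z \<le> t" for z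
            using ray_deriv[OF der] False that by simp
          obtain z where z: "1 < z" "z < t" "\<phi> (t *\<^sub>R x) - \<phi> (1 *\<^sub>R x) = (t - 1) * \<phi>' (z *\<^sub>R x) x"
            using MVT2[OF t(1) D] by blast
          have "\<psi> (z *\<^sub>R x) = z * \<phi>' (z *\<^sub>R x) x"
            unfolding \<psi>_def using linear_scale[OF has_derivative_linear[OF der], of "z *\<^sub>R x" z x] False z
            by simp
          then have "\<bar>\<phi>' (z *\<^sub>R x) x\<bar> \<le> M"
          proof -
            have "z * \<bar>\<phi>' (z *\<^sub>R x) x\<bar> \<le> M"
              using Mb[of "z *\<^sub>R x"] z(1) \<open>\<psi> (z *\<^sub>R x) = z * \<phi>' (z *\<^sub>R x) x\<close> by (simp add: abs_mult)
            moreover have "\<bar>\<phi>' (z *\<^sub>R x) x\<bar> \<le> z * \<bar>\<phi>' (z *\<^sub>R x) x\<bar>"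
              using mult_right_mono[of 1 z "\<bar>\<phi>' (z *\<^sub>R x) x\<bar>"] z(1) by simp
            ultimately show ?thesis by linarith
          qed
          then show ?thesis using z t by (simp add: abs_mult)
        qed
        then show ?thesis unfolding s_def w_def t_def[symmetric] using True t
          by (simp add: divide_le_eq t_def mult.commute)
      qed
    qed
  qed
  from LIMSEQ_unique[OF limB limA] show ?thesis unfolding \<psi>_def I_def n_def .
qed



lemma fd_lin:
  fixes u v :: "'a::euclidean_space \<Rightarrow> real"
  assumes "u differentiable (at x)" "v differentiable (at x)"
  shows "frechet_derivative (\<lambda>y. u y - e * v y) (at x) = (\<lambda>w. frechet_derivative u (at x) w - e * frechet_derivative v (at x) w)"
proof -
  have "((\<lambda>y. u y - e * v y) has_derivative (\<lambda>w. frechet_derivative u (at x) w - e * frechet_derivative v (at x) w)) (at x)"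
    by (rule has_derivative_diff has_derivative_mult_right | use assms in \<open>simp add: frechet_derivative_works[symmetric]\<close>)+
  then show ?thesis by (rule frechet_derivative_at[symmetric])
qed

lemma T_op_lin:
  fixes u v :: "'a::euclidean_space \<Rightarrow> real"
  assumes "u differentiable (at x)" "v differentiable (at x)"
  shows "T_op a (\<lambda>y. u y - e * v y) x = T_op a u x - e * T_op a v x"
  unfolding T_op_def rad_deriv_def fd_lin[OF assms] by (cases "x = 0") (simp_all add: field_simps)

lemma R_op_lin:
  fixes u v :: "'a::euclidean_space \<Rightarrow> real"
  assumes "Cmo (k + 1) u" "Cmo (k + 1) v" "x \<noteq> 0"
  shows "R_op a k (\<lambda>y. u y - e * v y) x = R_op a k u x - e * R_op a k v x"
  using assms
proof (induction k arbitrary: a x)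
  case 0
  then show ?case using T_op_lin[of u x v a e] by simp
next
  case (Suc k)
  have cu: "Cmo (k + 1) u" by (rule Cmo_mono_le[OF Suc.prems(1)]) simp
  have cv: "Cmo (k + 1) v" by (rule Cmo_mono_le[OF Suc.prems(2)]) simp
  have du: "R_op (a + 2) k u differentiable (at x)"
    using Cmo_R_op[of k 1 u "a + 2"] Suc.prems by simp
  have dv: "R_op (a + 2) k v differentiable (at x)"
    using Cmo_R_op[of k 1 v "a + 2"] Suc.prems by simp
  have "R_op a (Suc k) (\<lambda>y. u y - e * v y) x = T_op a (\<lambda>y. R_op (a + 2) k u y - e * R_op (a + 2) k v y) x"
    using T_op_cong[OF Suc.prems(3), of "R_op (a + 2) k (\<lambda>y. u y - e * v y)"] Suc.IH[OF cu cv] by simp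
  also have "\<dots> = R_op a (Suc k) u x - e * R_op a (Suc k) v x"
    using T_op_lin[OF du dv] by simp
  finally show ?case .
qed

lemma R_op_shift: "R_op a (Suc k) f = R_op a k (T_op (a + 2 * real k + 2) f)"
proof (induction k arbitrary: a)
  case 0 then show ?case by simp
next
  case (Suc k)
  have eq: "a + 2 + 2 * real k + 2 = a + 2 * real (Suc k) + 2" by simp
  have "R_op a (Suc (Suc k)) f = T_op a (R_op (a + 2) (Suc k) f)" by (simp only: R_op.simps)
  also have "\<dots> = T_op a (R_op (a + 2) k (T_op (a + 2 + 2 * real k + 2) f))" by (simp only: Suc.IH)
  also have "\<dots> = R_op a (Suc k) (T_op (a + 2 * real (Suc k) + 2) f)" unfolding eq by (simp only: R_op.simps)
  finally show ?case .
qed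

lemma fd_scale:
  assumes "g differentiable (at x)"
  shows "frechet_derivative g (at x) x = norm x * rad_deriv g x"
  unfolding rad_deriv_def
proof -
  have lin: "linear (frechet_derivative g (at x))" by (rule linear_frechet_derivative[OF assms])
  show "frechet_derivative g (at x) x = norm x * frechet_derivative g (at x) (x /\<^sub>R norm x)"
  proof (cases "x = 0")
    case True
    then show ?thesis using linear_0[OF lin] by simp
  next
    case False
    have "frechet_derivative g (at x) (norm x *\<^sub>R (x /\<^sub>R norm x)) = norm x * frechet_derivative g (at x) (x /\<^sub>R norm x)"
      using linear_scale[OF lin] by simp
    then show ?thesis using False by simp
  qed
qed

lemma cont_powr: "continuous_on (-{0}) (\<lambda>x::'a::euclidean_space. norm x powr p)"
  using Cmo_norm_powr[of 0 p] by simp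

lemma key_identity:
  fixes g :: "'a::euclidean_space \<Rightarrow> real"
  assumes cg: "Cmo 1 g" and S: "compact S" "0 \<notin> S" and zg: "\<And>x. x \<notin> S \<Longrightarrow> g x = 0"
    and cr: "continuous_on (-{0}) (rad_deriv g)"
  shows "integral\<^sup>L lborel (\<lambda>x. g x * rad_deriv g x * norm x powr (-(\<alpha>+1)))
     = - ((real DIM('a) - 2 - \<alpha>) / 2) * integral\<^sup>L lborel (\<lambda>x. (g x)\<^sup>2 * norm x powr (-(\<alpha>+2)))"
proof -
  define p where "p = -(\<alpha>+2)"
  have p1: "p + 1 = -(\<alpha>+1)" unfolding p_def by simp
  have dg: "g differentiable (at x)" if "x \<noteq> 0" for x using cg that by simp
  have cg0: "continuous_on (-{0}) g" using Cmo_mono[of 0 g] cg by simp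
  define \<phi> where "\<phi> = (\<lambda>x. g x * g x * norm x powr p)"
  define \<phi>' where "\<phi>' = (\<lambda>x v. g x * g x * (p * norm x powr (p - 2) * (x \<bullet> v))
     + (g x * frechet_derivative g (at x) v + frechet_derivative g (at x) v * g x) * norm x powr p)"
  have der: "(\<phi> has_derivative \<phi>' x) (at x)" if "x \<noteq> 0" for x
    unfolding \<phi>_def \<phi>'_def
    by (rule has_derivative_mult[OF has_derivative_mult has_derivative_norm_powr[OF that]])
       (use dg[OF that] in \<open>simp_all add: frechet_derivative_works[symmetric]\<close>)
  have psi: "\<phi>' x x = p * ((g x)\<^sup>2 * norm x powr p) + 2 * (g x * rad_deriv g x * norm x powr (-(\<alpha>+1)))" for x
  proof (cases "x = 0")
    case True then show ?thesis unfolding \<phi>'_def by simp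
  next
    case False
    have nx: "norm x > 0" using False by simp
    have a: "(x \<bullet> x) * norm x powr (p - 2) = norm x powr p"
      using nx by (simp add: powr_diff dot_square_norm power2_eq_square)
    have b: "norm x * norm x powr p = norm x powr (-(\<alpha>+1))"
      using nx unfolding p1[symmetric] by (simp add: powr_add)
    have "\<phi>' x x = p * (g x * g x) * ((x \<bullet> x) * norm x powr (p - 2))
        + 2 * g x * (norm x * rad_deriv g x) * norm x powr p"
      unfolding \<phi>'_def fd_scale[OF dg[OF False]] by (simp add: algebra_simps)
    also have "\<dots> = p * ((g x)\<^sup>2 * norm x powr p) + 2 * (g x * rad_deriv g x * (norm x * norm x powr p))"
      unfolding a by (simp add: algebra_simps power2_eq_square)
    finally show ?thesis unfolding b .
  qed
  have cpsi: "continuous_on (-{0}) (\<lambda>x. \<phi>' x x)"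
    unfolding psi by (intro continuous_intros cg0 cr cont_powr)
  have zpsi: "\<phi>' x x = 0" if "x \<notin> S" for x unfolding psi using zg[OF that] by simp
  have zphi: "\<phi> x = 0" if "x \<notin> S" for x unfolding \<phi>_def using zg[OF that] by simp
  have E: "integral\<^sup>L lborel (\<lambda>x. \<phi>' x x) = - real DIM('a) * integral\<^sup>L lborel \<phi>"
    by (rule euler_identity[OF S zphi der cpsi zpsi])
  have i1: "integrable lborel (\<lambda>x. (g x)\<^sup>2 * norm x powr p)"
    by (rule intg[OF _ S]) (auto intro!: continuous_intros cg0 cont_powr simp: zg)
  have i2: "integrable lborel (\<lambda>x. g x * rad_deriv g x * norm x powr (-(\<alpha>+1)))"
    by (rule intg[OF _ S]) (auto intro!: continuous_intros cg0 cont_powr cr simp: zg)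
  have "integral\<^sup>L lborel (\<lambda>x. \<phi>' x x) = p * integral\<^sup>L lborel (\<lambda>x. (g x)\<^sup>2 * norm x powr p)
      + 2 * integral\<^sup>L lborel (\<lambda>x. g x * rad_deriv g x * norm x powr (-(\<alpha>+1)))"
    unfolding psi using i1 i2 by simp
  moreover have "integral\<^sup>L lborel \<phi> = integral\<^sup>L lborel (\<lambda>x. (g x)\<^sup>2 * norm x powr p)"
    unfolding \<phi>_def by (simp add: power2_eq_square)
  ultimately show ?thesis using E unfolding p_def by (simp add: field_simps)
qed



theorem lemma2p3:
  fixes \<alpha> \<beta> :: real and k :: nat
  shows "(\<forall>f :: 'a::euclidean_space \<Rightarrow> real. Cc_punct (k + 1) f \<longrightarrow>
            (\<forall>x. x \<noteq> 0 \<longrightarrow>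
               R_op \<alpha> k (\<lambda>y. norm y powr \<beta> * f y) x = norm x powr \<beta> * R_op (\<alpha> - 2 * \<beta>) k f x))
       \<and> (\<forall>f :: 'a \<Rightarrow> real. Cc_punct (k + 2) f \<longrightarrow>
            wnorm2 \<alpha> (R_op \<alpha> k (rad_deriv f)) =
              (real DIM('a) - 2 * real k - 4 - \<alpha>)\<^sup>2 / 4 * wnorm2 (\<alpha> + 2) (R_op (\<alpha> + 2) k f)
              + wnorm2 \<alpha> (R_op \<alpha> (k + 1) f)
            \<and> winner (\<alpha> + 1) (R_op \<alpha> k (rad_deriv f)) (R_op (\<alpha> + 2) k f) =
              (\<alpha> + 2 * real k + 4 - real DIM('a)) / 2 * wnorm2 (\<alpha> + 2) (R_op (\<alpha> + 2) k f))"
proof (intro conjI allI impI)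
  fix f :: "'a \<Rightarrow> real" and x :: 'a
  assume "Cc_punct (k + 1) f" "x \<noteq> 0"
  then show "R_op \<alpha> k (\<lambda>y. norm y powr \<beta> * f y) x = norm x powr \<beta> * R_op (\<alpha> - 2 * \<beta>) k f x"
    using part1[of k f x \<alpha> \<beta>] Cm_Cmo unfolding Cc_punct_def by blast
next
  fix f :: "'a \<Rightarrow> real"
  assume ass: "Cc_punct (k + 2) f"
  define S where "S = closure {x. f x \<noteq> 0}"
  have cf: "Cmo (k + 2) f" using ass Cm_Cmo unfolding Cc_punct_def by blast
  have S: "compact S" "0 \<notin> S" using ass unfolding Cc_punct_def S_def by auto
  have oV: "open (-S)" unfolding S_def by auto
  have zf: "f y = 0" if "y \<in> -S" for y using that closure_subset[of "{x. f x \<noteq> 0}"] unfolding S_def by blast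
  define g where "g = R_op (\<alpha> + 2) k f"
  define h where "h = R_op \<alpha> (k + 1) f"
  have hT: "h = T_op \<alpha> g" unfolding h_def g_def by simp
  have cg: "Cmo 1 g" unfolding g_def using Cmo_R_op[of k 1 f "\<alpha> + 2"] cf by (simp add: add.commute)
  have cg0: "continuous_on (-{0}) g" using Cmo_mono[of 0 g] cg by simp
  have ch0: "continuous_on (-{0}) h" unfolding hT using Cmo_T_op[of 0 g \<alpha>] cg by simp
  have cr0: "continuous_on (-{0}) (rad_deriv g)" using Cmo_rad_deriv[of 0 g] cg by simp
  have zg: "g y = 0" if "y \<notin> S" for y
    unfolding g_def using R_op_zero[OF oV zf] that by simp
  have zh: "h y = 0" if "y \<notin> S" for y
    unfolding h_def by (rule R_op_zero[OF oV]) (use zf that in auto)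
  define n where "n = real DIM('a)"
  define c where "c = (n - 2 - (\<alpha> + 2 * real k + 2)) / 2"
  define d where "d = (n - 2 - \<alpha>) / 2"
  define R1 where "R1 = R_op \<alpha> k (rad_deriv f)"
  have rf: "rad_deriv f = (\<lambda>y. T_op (\<alpha> + 2 * real k + 2) f y - c * (norm y powr (-1) * f y))"
  proof (rule ext)
    fix y :: 'a
    show "rad_deriv f y = T_op (\<alpha> + 2 * real k + 2) f y - c * (norm y powr (-1) * f y)"
    proof (cases "y = 0")
      case True then show ?thesis unfolding T_op_def by simp
    next
      case False
      then have ny: "norm y > 0" by simp
      then show ?thesis unfolding T_op_def c_def n_def using ny by (simp add: powr_neg_one field_simps)
    qed
  qed
  have c1: "Cmo (k + 1) (T_op (\<alpha> + 2 * real k + 2) f)" using Cmo_T_op[of "k+1" f] cf by simp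
  have c2: "Cmo (k + 1) (\<lambda>y. norm y powr (-1) * f y)"
    by (intro Cmo_mult Cmo_norm_powr Cmo_mono_le[OF cf]) simp
  have cf1: "Cmo (k + 1) f" by (rule Cmo_mono_le[OF cf]) simp
  have P1: "R1 x = h x - c * (norm x powr (-1) * g x)" if "x \<noteq> 0" for x
  proof -
    have "R1 x = R_op \<alpha> k (T_op (\<alpha> + 2 * real k + 2) f) x - c * R_op \<alpha> k (\<lambda>y. norm y powr (-1) * f y) x"
      unfolding R1_def rf by (rule R_op_lin[OF c1 c2 that])
    also have "R_op \<alpha> k (T_op (\<alpha> + 2 * real k + 2) f) = h"
      unfolding h_def using R_op_shift[of \<alpha> k f] by simp
    also have "R_op \<alpha> k (\<lambda>y. norm y powr (-1) * f y) x = norm x powr (-1) * R_op (\<alpha> - 2 * (-1)) k f x"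
      by (rule part1[OF cf1 that])
    finally show ?thesis unfolding g_def by simp
  qed
  have P2: "h x = rad_deriv g x + d * (norm x powr (-1) * g x)" if "x \<noteq> 0" for x
    unfolding hT T_op_def d_def n_def using that by (simp add: powr_neg_one field_simps)
  have e1: "norm x powr (-1) * norm x powr (-\<alpha>) = norm x powr (-(\<alpha>+1))" for x :: 'a
  proof -
    have "-(\<alpha>+1) = -1 + -\<alpha>" by simp
    then show ?thesis by (simp only: powr_add)
  qed
  have e2: "norm x powr (-1) * norm x powr (-(\<alpha>+1)) = norm x powr (-(\<alpha>+2))" for x :: 'a
  proof -
    have "-(\<alpha>+2) = -1 + -(\<alpha>+1)" by simp
    then show ?thesis by (simp only: powr_add)
  qed
  have Q1: "(R1 x)\<^sup>2 * norm x powr (-\<alpha>) = (h x)\<^sup>2 * norm x powr (-\<alpha>)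
       - 2 * c * (h x * g x * norm x powr (-(\<alpha>+1))) + c\<^sup>2 * ((g x)\<^sup>2 * norm x powr (-(\<alpha>+2)))" for x
  proof (cases "x = 0")
    case True then show ?thesis by simp
  next
    case False
    show ?thesis unfolding P1[OF False] e1[symmetric] e2[symmetric]
      by (simp add: power2_eq_square algebra_simps)
  qed
  have Q2: "h x * g x * norm x powr (-(\<alpha>+1)) = g x * rad_deriv g x * norm x powr (-(\<alpha>+1))
       + d * ((g x)\<^sup>2 * norm x powr (-(\<alpha>+2)))" for x
  proof (cases "x = 0")
    case True then show ?thesis by simp
  next
    case False
    show ?thesis unfolding P2[OF False] e2[symmetric]
      by (simp add: power2_eq_square algebra_simps)
  qed
  have Q3: "R1 x * g x * norm x powr (-(\<alpha>+1)) = h x * g x * norm x powr (-(\<alpha>+1))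
       - c * ((g x)\<^sup>2 * norm x powr (-(\<alpha>+2)))" for x
  proof (cases "x = 0")
    case True then show ?thesis by simp
  next
    case False
    show ?thesis unfolding P1[OF False] e2[symmetric]
      by (simp add: power2_eq_square algebra_simps)
  qed
  have ihh: "integrable lborel (\<lambda>x. (h x)\<^sup>2 * norm x powr (-\<alpha>))"
    by (rule intg[OF _ S]) (auto intro!: continuous_intros ch0 cont_powr simp: zh)
  have ihg: "integrable lborel (\<lambda>x. h x * g x * norm x powr (-(\<alpha>+1)))"
    by (rule intg[OF _ S]) (auto intro!: continuous_intros ch0 cg0 cont_powr simp: zh)
  have igg: "integrable lborel (\<lambda>x. (g x)\<^sup>2 * norm x powr (-(\<alpha>+2)))"
    by (rule intg[OF _ S]) (auto intro!: continuous_intros cg0 cont_powr simp: zg)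
  have igr: "integrable lborel (\<lambda>x. g x * rad_deriv g x * norm x powr (-(\<alpha>+1)))"
    by (rule intg[OF _ S]) (auto intro!: continuous_intros cg0 cr0 cont_powr simp: zg)
  define G where "G = integral\<^sup>L lborel (\<lambda>x. (g x)\<^sup>2 * norm x powr (-(\<alpha>+2)))"
  have K: "integral\<^sup>L lborel (\<lambda>x. g x * rad_deriv g x * norm x powr (-(\<alpha>+1))) = - d * G"
    unfolding G_def d_def n_def by (rule key_identity[OF cg S zg cr0])
  have HG: "integral\<^sup>L lborel (\<lambda>x. h x * g x * norm x powr (-(\<alpha>+1))) = 0"
    unfolding Q2 using igr igg K unfolding G_def by simp
  have W1: "wnorm2 \<alpha> R1 = c\<^sup>2 * G + wnorm2 \<alpha> h"
    unfolding wnorm2_def Q1 using ihh ihg igg HG unfolding G_def by simp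
  have W2: "winner (\<alpha> + 1) R1 g = - c * G"
    unfolding winner_def Q3 using ihg igg HG unfolding G_def by simp
  have GW: "wnorm2 (\<alpha> + 2) g = G" unfolding wnorm2_def G_def by simp
  have cc: "c\<^sup>2 = (n - 2 * real k - 4 - \<alpha>)\<^sup>2 / 4" unfolding c_def by (simp add: power2_eq_square field_simps)
  have cc2: "- c = (\<alpha> + 2 * real k + 4 - n) / 2" unfolding c_def by (simp add: field_simps)
  show "wnorm2 \<alpha> (R_op \<alpha> k (rad_deriv f)) =
       (real DIM('a) - 2 * real k - 4 - \<alpha>)\<^sup>2 / 4 * wnorm2 (\<alpha> + 2) (R_op (\<alpha> + 2) k f)
       + wnorm2 \<alpha> (R_op \<alpha> (k + 1) f)"
    using W1 GW cc unfolding R1_def g_def h_def n_def by simp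
  show "winner (\<alpha> + 1) (R_op \<alpha> k (rad_deriv f)) (R_op (\<alpha> + 2) k f) =
       (\<alpha> + 2 * real k + 4 - real DIM('a)) / 2 * wnorm2 (\<alpha> + 2) (R_op (\<alpha> + 2) k f)"
    using W2 GW cc2 unfolding R1_def g_def n_def by simp
qed

end
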